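(* Given a Moore-Penrose dagger additive category $(\mathbb{X}, \dagger)$ and any object $X \in \mathbb{X}$, $\mathfrak{G}\left[ (\mathbb{X}, \dagger) \right]_X$ is a Markov category with conditionals. In particular, given a map $F= \left( \begin{bmatrix} f \\ g \end{bmatrix}, \begin{bmatrix} \alpha & \beta \\ \beta^\dagger & \delta \end{bmatrix}, \begin{bmatrix} s \\ t \end{bmatrix} \right): A \to B \otimes C$ in $\mathfrak{G}\left[ (\mathbb{X}, \dagger) \right]_X$, the map $F\vert_B: B \otimes A \to C$ defined as the triple: \begin{align*} F\vert_B = \left( \begin{bmatrix} \beta^\dagger \circ \alpha^\circ & g - \beta^\dagger \circ \alpha^\circ \circ f \end{bmatrix}, \delta - \beta^\dagger \circ \alpha^\circ \circ \beta, t - \beta^\dagger \circ \alpha^\circ \circ s \right) \end{align*} is a conditional of $F$.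
   Context: A dagger additive category $(\mathbb{X}, \dagger)$ is a dagger category enriched in abelian groups with additive dagger and finite biproducts satisfying $\pi_j^\dagger = \iota_j$; maps between biproducts are written as matrices and the dagger acts as conjugate transpose. A Moore-Penrose inverse of $f: A \to B$ is a map $f^\circ: B \to A$ with $f \circ f^\circ \circ f = f$, $f^\circ \circ f \circ f^\circ = f^\circ$, $(f \circ f^\circ)^\dagger = f \circ f^\circ$, $(f^\circ \circ f)^\dagger = f^\circ \circ f$; $(\mathbb{X},\dagger)$ is Moore-Penrose if every map has one. A map $p$ is $\dagger$-positive if $p = \phi^\dagger \circ \phi$ for some $\phi$. For an object $X$, the Gauss construction $\mathfrak{G}\left[ (\mathbb{X}, \dagger) \right]_X$ is the Markov category with the objects of $\mathbb{X}$, maps $A \to B$ the triples $(f,p,x)$ with $f: A \to B$, $p: B \to B$ $\dagger$-positive, $x: X \to B$; identities $\mathsf{Id}_A = (\mathsf{id}_A,0,0)$; composition $(g,q,y) \circ (f,p,x) = (g \circ f, q + g \circ p \circ g^\dagger, y + g \circ x)$; $A \otimes B = A \oplus B$, $(f,p,x) \otimes (g,q,y) = \left(f \oplus g, p \oplus q, \begin{bmatrix} x \\ y \end{bmatrix}\right)$, unit the zero object $\mathsf{0}$; copy $\mathsf{copy}_A = \left(\begin{bmatrix} \mathsf{id}_A \\ \mathsf{id}_A \end{bmatrix}, 0, 0\right)$, delete $\mathsf{del}_A = (0,0,0): A \to \mathsf{0}$. In $F$, $f: A \to B$, $g: A \to C$, $\alpha: B \to B$, $\beta: C \to B$, $\delta: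 C \to C$, $s: X \to B$, $t: X \to C$. A map $G: B \otimes A \to C$ is a conditional of $F: A \to B \otimes C$ if $(\mathsf{Id}_B \otimes G) \circ (\mathsf{copy}_B \otimes \mathsf{Id}_A) \circ (\mathsf{Id}_B \otimes \mathsf{del}_C \otimes \mathsf{Id}_A) \circ (F \otimes \mathsf{Id}_A) \circ \mathsf{copy}_A = F$; a Markov category with conditionals is one in which every map $A \to B \otimes C$ has a conditional. *)

theory Defs
  imports Main
begin

text \<open>A category is presented by a type 'o of objects and a type 'm of morphisms
(every element of 'm is a morphism), with source/target, composition
(cmp g f = g after f, meaningful when tgt f = src g), identities, the abelian group
enrichment (cadd, cneg, czero A B : A -> B), the dagger, chosen binary biproducts
bip A B with projections pr1, pr2 (injections are their daggers), and a zero object.\<close>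

record ('o, 'm) dacat =
  src  :: "'m \<Rightarrow> 'o"
  tgt  :: "'m \<Rightarrow> 'o"
  cmp  :: "'m \<Rightarrow> 'm \<Rightarrow> 'm"
  cid  :: "'o \<Rightarrow> 'm"
  cadd :: "'m \<Rightarrow> 'm \<Rightarrow> 'm"
  cneg :: "'m \<Rightarrow> 'm"
  czero :: "'o \<Rightarrow> 'o \<Rightarrow> 'm"
  dag  :: "'m \<Rightarrow> 'm"
  bip  :: "'o \<Rightarrow> 'o \<Rightarrow> 'o"
  pr1  :: "'o \<Rightarrow> 'o \<Rightarrow> 'm"
  pr2  :: "'o \<Rightarrow> 'o \<Rightarrow> 'm"
  zobj :: "'o"

definition hom :: "('o, 'm, 'x) dacat_scheme \<Rightarrow> 'o \<Rightarrow> 'o \<Rightarrow> 'm set" where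
  "hom K A B = {f. src K f = A \<and> tgt K f = B}"

definition csub :: "('o, 'm, 'x) dacat_scheme \<Rightarrow> 'm \<Rightarrow> 'm \<Rightarrow> 'm" where
  "csub K a b = cadd K a (cneg K b)"

definition dagger_additive_cat :: "('o, 'm, 'x) dacat_scheme \<Rightarrow> bool" where
  "dagger_additive_cat K \<longleftrightarrow>
     \<comment> \<open>category\<close>
     (\<forall>A. src K (cid K A) = A \<and> tgt K (cid K A) = A)
   \<and> (\<forall>f g. tgt K f = src K g \<longrightarrow> src K (cmp K g f) = src K f \<and> tgt K (cmp K g f) = tgt K g)
   \<and> (\<forall>f. cmp K f (cid K (src K f)) = f \<and> cmp K (cid K (tgt K f)) f = f)
   \<and> (\<forall>f g h. tgt K f = src K g \<and> tgt K g = src K h \<longrightarrow>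
        cmp K h (cmp K g f) = cmp K (cmp K h g) f)
     \<comment> \<open>enrichment in abelian groups\<close>
   \<and> (\<forall>A B. czero K A B \<in> hom K A B)
   \<and> (\<forall>f g. src K f = src K g \<and> tgt K f = tgt K g \<longrightarrow>
        src K (cadd K f g) = src K f \<and> tgt K (cadd K f g) = tgt K f)
   \<and> (\<forall>f. src K (cneg K f) = src K f \<and> tgt K (cneg K f) = tgt K f)
   \<and> (\<forall>f g h. src K f = src K g \<and> tgt K f = tgt K g \<and> src K g = src K h \<and> tgt K g = tgt K h \<longrightarrow>
        cadd K (cadd K f g) h = cadd K f (cadd K g h))
   \<and> (\<forall>f g. src K f = src K g \<and> tgt K f = tgt K g \<longrightarrow> cadd K f g = cadd K g f)
   \<and> (\<forall>f. cadd K f (czero K (src K f) (tgt K f)) = f)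
   \<and> (\<forall>f. cadd K f (cneg K f) = czero K (src K f) (tgt K f))
   \<and> (\<forall>f g h. src K f = src K g \<and> tgt K f = tgt K g \<and> tgt K f = src K h \<longrightarrow>
        cmp K h (cadd K f g) = cadd K (cmp K h f) (cmp K h g))
   \<and> (\<forall>f g h. src K f = src K g \<and> tgt K f = tgt K g \<and> src K f = tgt K h \<longrightarrow>
        cmp K (cadd K f g) h = cadd K (cmp K f h) (cmp K g h))
     \<comment> \<open>additive dagger\<close>
   \<and> (\<forall>f. src K (dag K f) = tgt K f \<and> tgt K (dag K f) = src K f)
   \<and> (\<forall>f. dag K (dag K f) = f)
   \<and> (\<forall>A. dag K (cid K A) = cid K A)
   \<and> (\<forall>f g. tgt K f = src K g \<longrightarrow> dag K (cmp K g f) = cmp K (dag K f) (dag K g))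
   \<and> (\<forall>f g. src K f = src K g \<and> tgt K f = tgt K g \<longrightarrow>
        dag K (cadd K f g) = cadd K (dag K f) (dag K g))
     \<comment> \<open>binary biproducts with injections = daggers of projections\<close>
   \<and> (\<forall>A B. pr1 K A B \<in> hom K (bip K A B) A \<and> pr2 K A B \<in> hom K (bip K A B) B
        \<and> cmp K (pr1 K A B) (dag K (pr1 K A B)) = cid K A
        \<and> cmp K (pr2 K A B) (dag K (pr2 K A B)) = cid K B
        \<and> cmp K (pr1 K A B) (dag K (pr2 K A B)) = czero K B A
        \<and> cmp K (pr2 K A B) (dag K (pr1 K A B)) = czero K A B
        \<and> cadd K (cmp K (dag K (pr1 K A B)) (pr1 K A B)) (cmp K (dag K (pr2 K A B)) (pr2 K A B))
            = cid K (bip K A B))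
     \<comment> \<open>zero object (empty biproduct)\<close>
   \<and> (\<forall>f. src K f = zobj K \<longrightarrow> f = czero K (zobj K) (tgt K f))
   \<and> (\<forall>f. tgt K f = zobj K \<longrightarrow> f = czero K (src K f) (zobj K))"

definition mp_inverse :: "('o, 'm, 'x) dacat_scheme \<Rightarrow> 'm \<Rightarrow> 'm \<Rightarrow> bool" where
  "mp_inverse K f h \<longleftrightarrow> src K h = tgt K f \<and> tgt K h = src K f
     \<and> cmp K f (cmp K h f) = f \<and> cmp K h (cmp K f h) = h
     \<and> dag K (cmp K f h) = cmp K f h \<and> dag K (cmp K h f) = cmp K h f"

definition moore_penrose :: "('o, 'm, 'x) dacat_scheme \<Rightarrow> bool" where
  "moore_penrose K \<longleftrightarrow> (\<forall>f. \<exists>h. mp_inverse K f h)"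

definition dag_positive :: "('o, 'm, 'x) dacat_scheme \<Rightarrow> 'm \<Rightarrow> bool" where
  "dag_positive K p \<longleftrightarrow> (\<exists>\<phi>. p = cmp K (dag K \<phi>) \<phi>)"

text \<open>col2 x y = [x; y] : D -> tgt x (+) tgt y;  row2 x y = [x  y] : src x (+) src y -> E;
 mat2 a b c d = [[a, b], [c, d]].\<close>

definition col2 :: "('o, 'm, 'x) dacat_scheme \<Rightarrow> 'm \<Rightarrow> 'm \<Rightarrow> 'm" where
  "col2 K x y = cadd K (cmp K (dag K (pr1 K (tgt K x) (tgt K y))) x)
                       (cmp K (dag K (pr2 K (tgt K x) (tgt K y))) y)"

definition row2 :: "('o, 'm, 'x) dacat_scheme \<Rightarrow> 'm \<Rightarrow> 'm \<Rightarrow> 'm" where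
  "row2 K x y = cadd K (cmp K x (pr1 K (src K x) (src K y)))
                       (cmp K y (pr2 K (src K x) (src K y)))"

definition mat2 :: "('o, 'm, 'x) dacat_scheme \<Rightarrow> 'm \<Rightarrow> 'm \<Rightarrow> 'm \<Rightarrow> 'm \<Rightarrow> 'm" where
  "mat2 K a b c d = col2 K (row2 K a b) (row2 K c d)"

definition dsum :: "('o, 'm, 'x) dacat_scheme \<Rightarrow> 'm \<Rightarrow> 'm \<Rightarrow> 'm" where
  "dsum K f g = mat2 K f (czero K (src K g) (tgt K f)) (czero K (src K f) (tgt K g)) g"

type_synonym 'm gmor = "'m \<times> 'm \<times> 'm"

definition gmap :: "('o, 'm, 'x) dacat_scheme \<Rightarrow> 'o \<Rightarrow> 'o \<Rightarrow> 'o \<Rightarrow> 'm gmor \<Rightarrow> bool" where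
  "gmap K X A B F = (case F of (f, p, x) \<Rightarrow>
      f \<in> hom K A B \<and> p \<in> hom K B B \<and> dag_positive K p \<and> x \<in> hom K X B)"

definition gid :: "('o, 'm, 'x) dacat_scheme \<Rightarrow> 'o \<Rightarrow> 'o \<Rightarrow> 'm gmor" where
  "gid K X A = (cid K A, czero K A A, czero K X A)"

definition gcomp :: "('o, 'm, 'x) dacat_scheme \<Rightarrow> 'm gmor \<Rightarrow> 'm gmor \<Rightarrow> 'm gmor" where
  "gcomp K G F = (case G of (g, q, y) \<Rightarrow> case F of (f, p, x) \<Rightarrow>
      (cmp K g f, cadd K q (cmp K g (cmp K p (dag K g))), cadd K y (cmp K g x)))"

definition gtensor :: "('o, 'm, 'x) dacat_scheme \<Rightarrow> 'm gmor \<Rightarrow> 'm gmor \<Rightarrow> 'm gmor" where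
  "gtensor K F G = (case F of (f, p, x) \<Rightarrow> case G of (g, q, y) \<Rightarrow>
      (dsum K f g, dsum K p q, col2 K x y))"

definition gcopy :: "('o, 'm, 'x) dacat_scheme \<Rightarrow> 'o \<Rightarrow> 'o \<Rightarrow> 'm gmor" where
  "gcopy K X A = (col2 K (cid K A) (cid K A), czero K (bip K A A) (bip K A A), czero K X (bip K A A))"

definition gdel :: "('o, 'm, 'x) dacat_scheme \<Rightarrow> 'o \<Rightarrow> 'o \<Rightarrow> 'm gmor" where
  "gdel K X A = (czero K A (zobj K), czero K (zobj K) (zobj K), czero K X (zobj K))"

text \<open>Lifting a map h of the base category to (h, 0, 0); used for the structural
isomorphisms (associator, unitor) of the monoidal structure, which the paper leaves implicit.\<close>

definition glift :: "('o, 'm, 'x) dacat_scheme \<Rightarrow> 'o \<Rightarrow> 'm \<Rightarrow> 'm gmor" where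
  "glift K X h = (h, czero K (tgt K h) (tgt K h), czero K X (tgt K h))"

definition bassoc :: "('o, 'm, 'x) dacat_scheme \<Rightarrow> 'o \<Rightarrow> 'o \<Rightarrow> 'o \<Rightarrow> 'm" where
  "bassoc K A B C =
     col2 K (cmp K (pr1 K A B) (pr1 K (bip K A B) C))
            (col2 K (cmp K (pr2 K A B) (pr1 K (bip K A B) C)) (pr2 K (bip K A B) C))"

text \<open>G : B (x) A -> C is a conditional of F : A -> B (x) C :
 (Id_B (x) G) o (copy_B (x) Id_A) o (Id_B (x) del_C (x) Id_A) o (F (x) Id_A) o copy_A = F,
 with the associators and the left unitor 0 (x) A -> A inserted explicitly.\<close>

definition is_conditional ::
  "('o, 'm, 'x) dacat_scheme \<Rightarrow> 'o \<Rightarrow> 'o \<Rightarrow> 'o \<Rightarrow> 'o \<Rightarrow> 'm gmor \<Rightarrow> 'm gmor \<Rightarrow> bool" where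
  "is_conditional K X A B C F G \<longleftrightarrow>
     gmap K X (bip K B A) C G \<and>
     gcomp K (gtensor K (gid K X B) G)
      (gcomp K (glift K X (bassoc K B B A))
       (gcomp K (gtensor K (gcopy K X B) (gid K X A))
        (gcomp K (gtensor K (gid K X B) (glift K X (pr2 K (zobj K) A)))
         (gcomp K (gtensor K (gid K X B) (gtensor K (gdel K X C) (gid K X A)))
          (gcomp K (glift K X (bassoc K B C A))
           (gcomp K (gtensor K F (gid K X A))
            (gcopy K X A))))))) = F"

end

theory Submission
  imports Defs
begin


locale dac =
  fixes K :: "('o,'m,'x) dacat_scheme"
  assumes ax: "dagger_additive_cat K"
begin

lemmas r0 = ax[unfolded dagger_additive_cat_def]
lemmas c1 = r0[THEN conjunct1] and r1 = r0[THEN conjunct2]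
lemmas c2 = r1[THEN conjunct1] and r2 = r1[THEN conjunct2]
lemmas c3 = r2[THEN conjunct1] and r3 = r2[THEN conjunct2]
lemmas c4 = r3[THEN conjunct1] and r4 = r3[THEN conjunct2]
lemmas c5 = r4[THEN conjunct1] and r5 = r4[THEN conjunct2]
lemmas c6 = r5[THEN conjunct1] and r6 = r5[THEN conjunct2]
lemmas c7 = r6[THEN conjunct1] and r7 = r6[THEN conjunct2]
lemmas c8 = r7[THEN conjunct1] and r8 = r7[THEN conjunct2]
lemmas c9 = r8[THEN conjunct1] and r9 = r8[THEN conjunct2]
lemmas c10 = r9[THEN conjunct1] and r10 = r9[THEN conjunct2]
lemmas c11 = r10[THEN conjunct1] and r11 = r10[THEN conjunct2]
lemmas c12 = r11[THEN conjunct1] and r12 = r11[THEN conjunct2]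
lemmas c13 = r12[THEN conjunct1] and r13 = r12[THEN conjunct2]
lemmas c14 = r13[THEN conjunct1] and r14 = r13[THEN conjunct2]
lemmas c15 = r14[THEN conjunct1] and r15 = r14[THEN conjunct2]
lemmas c16 = r15[THEN conjunct1] and r16 = r15[THEN conjunct2]
lemmas c17 = r16[THEN conjunct1] and r17 = r16[THEN conjunct2]
lemmas c18 = r17[THEN conjunct1] and r18 = r17[THEN conjunct2]
lemmas c19 = r18[THEN conjunct1] and r19 = r18[THEN conjunct2]
lemmas c20 = r19[THEN conjunct1] and r20 = r19[THEN conjunct2]
lemmas c21 = r20

abbreviation cc (infixr "\<cdot>" 55) where "g \<cdot> f \<equiv> cmp K g f"
abbreviation ad (infixl "\<oplus>" 65) where "a \<oplus> b \<equiv> cadd K a b"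
abbreviation dg ("_\<^sup>\<dagger>" [1000] 1000) where "f\<^sup>\<dagger> \<equiv> dag K f"
abbreviation ng ("\<ominus>_" [81] 80) where "\<ominus>f \<equiv> cneg K f"

lemma src_cid[simp]: "src K (cid K A) = A" and tgt_cid[simp]: "tgt K (cid K A) = A"
  using c1 by auto
lemma src_cmp[simp]: "tgt K f = src K g \<Longrightarrow> src K (g \<cdot> f) = src K f"
  and tgt_cmp[simp]: "tgt K f = src K g \<Longrightarrow> tgt K (g \<cdot> f) = tgt K g"
  using c2 by auto
lemma cmp_id_r0: "f \<cdot> cid K (src K f) = f" and cmp_id_l0: "cid K (tgt K f) \<cdot> f = f"
  using c3 by auto
lemma cmp_id_r[simp]: "src K f = A \<Longrightarrow> f \<cdot> cid K A = f"
  and cmp_id_l[simp]: "tgt K f = B \<Longrightarrow> cid K B \<cdot> f = f"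
  using cmp_id_r0 cmp_id_l0 by auto
lemma assoc[simp]: "tgt K f = src K g \<Longrightarrow> tgt K g = src K h \<Longrightarrow> (h \<cdot> g) \<cdot> f = h \<cdot> (g \<cdot> f)"
  using c4 by metis
lemma src_czero[simp]: "src K (czero K A B) = A" and tgt_czero[simp]: "tgt K (czero K A B) = B"
  using c5 unfolding hom_def by auto
lemma src_add[simp]: "src K f = src K g \<Longrightarrow> tgt K f = tgt K g \<Longrightarrow> src K (f \<oplus> g) = src K f"
  and tgt_add[simp]: "src K f = src K g \<Longrightarrow> tgt K f = tgt K g \<Longrightarrow> tgt K (f \<oplus> g) = tgt K f"
  using c6 by auto
lemma src_neg[simp]: "src K (\<ominus>f) = src K f" and tgt_neg[simp]: "tgt K (\<ominus>f) = tgt K f"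
  using c7 by auto
lemma add_assoc[simp]: "src K f = src K g \<Longrightarrow> tgt K f = tgt K g \<Longrightarrow> src K g = src K h \<Longrightarrow> tgt K g = tgt K h \<Longrightarrow>
   (f \<oplus> g) \<oplus> h = f \<oplus> (g \<oplus> h)"
  using c8 by metis
lemma add_comm: "src K f = src K g \<Longrightarrow> tgt K f = tgt K g \<Longrightarrow> f \<oplus> g = g \<oplus> f"
  using c9 by metis
lemma add_zero0: "f \<oplus> czero K (src K f) (tgt K f) = f"
  using c10 by metis
lemma add_neg0: "f \<oplus> (\<ominus>f) = czero K (src K f) (tgt K f)"
  using c11 by metis
lemma add_zero_r[simp]: "src K f = A \<Longrightarrow> tgt K f = B \<Longrightarrow> f \<oplus> czero K A B = f"
  using add_zero0 by auto
lemma add_zero_l[simp]: "src K f = A \<Longrightarrow> tgt K f = B \<Longrightarrow> czero K A B \<oplus> f = f"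
  using add_zero0 add_comm by (metis src_czero tgt_czero)
lemma add_neg_r[simp]: "src K f = A \<Longrightarrow> tgt K f = B \<Longrightarrow> f \<oplus> (\<ominus>f) = czero K A B"
  using add_neg0 by auto
lemma add_neg_l[simp]: "src K f = A \<Longrightarrow> tgt K f = B \<Longrightarrow> (\<ominus>f) \<oplus> f = czero K A B"
  using add_neg0 add_comm by (metis src_neg tgt_neg)
lemma cmp_add_r[simp]: "src K f = src K g \<Longrightarrow> tgt K f = tgt K g \<Longrightarrow> tgt K f = src K h \<Longrightarrow>
        h \<cdot> (f \<oplus> g) = (h \<cdot> f) \<oplus> (h \<cdot> g)"
  using c12 by metis
lemma cmp_add_l[simp]: "src K f = src K g \<Longrightarrow> tgt K f = tgt K g \<Longrightarrow> src K f = tgt K h \<Longrightarrow>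
        (f \<oplus> g) \<cdot> h = (f \<cdot> h) \<oplus> (g \<cdot> h)"
  using c13 by metis
lemma src_dag[simp]: "src K (f\<^sup>\<dagger>) = tgt K f" and tgt_dag[simp]: "tgt K (f\<^sup>\<dagger>) = src K f"
  using c14 by auto
lemma dag_dag[simp]: "(f\<^sup>\<dagger>)\<^sup>\<dagger> = f" and dag_cid[simp]: "(cid K A)\<^sup>\<dagger> = cid K A"
  using c15 c16 by auto
lemma dag_cmp[simp]: "tgt K f = src K g \<Longrightarrow> (g \<cdot> f)\<^sup>\<dagger> = f\<^sup>\<dagger> \<cdot> g\<^sup>\<dagger>"
  using c17 by auto
lemma dag_add[simp]: "src K f = src K g \<Longrightarrow> tgt K f = tgt K g \<Longrightarrow> (f \<oplus> g)\<^sup>\<dagger> = f\<^sup>\<dagger> \<oplus> g\<^sup>\<dagger>"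
  using c18 by auto
lemma bip_ax: "pr1 K A B \<in> hom K (bip K A B) A \<and> pr2 K A B \<in> hom K (bip K A B) B
        \<and> pr1 K A B \<cdot> (pr1 K A B)\<^sup>\<dagger> = cid K A
        \<and> pr2 K A B \<cdot> (pr2 K A B)\<^sup>\<dagger> = cid K B
        \<and> pr1 K A B \<cdot> (pr2 K A B)\<^sup>\<dagger> = czero K B A
        \<and> pr2 K A B \<cdot> (pr1 K A B)\<^sup>\<dagger> = czero K A B
        \<and> ((pr1 K A B)\<^sup>\<dagger> \<cdot> pr1 K A B) \<oplus> ((pr2 K A B)\<^sup>\<dagger> \<cdot> pr2 K A B) = cid K (bip K A B)"
  using c19 by blast
lemma src_pr1[simp]: "src K (pr1 K A B) = bip K A B" and tgt_pr1[simp]: "tgt K (pr1 K A B) = A"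
  and src_pr2[simp]: "src K (pr2 K A B) = bip K A B" and tgt_pr2[simp]: "tgt K (pr2 K A B) = B"
  using bip_ax unfolding hom_def by auto
lemma zobj_src: "src K f = zobj K \<Longrightarrow> f = czero K (zobj K) (tgt K f)"
  and zobj_tgt: "tgt K f = zobj K \<Longrightarrow> f = czero K (src K f) (zobj K)"
  using c20 c21 by auto

lemma cancel0: "src K a = A \<Longrightarrow> tgt K a = B \<Longrightarrow> a \<oplus> a = a \<Longrightarrow> a = czero K A B"
proof -
  assume h: "src K a = A" "tgt K a = B" "a \<oplus> a = a"
  have "a = a \<oplus> (a \<oplus> (\<ominus>a))" using h by simp
  also have "\<dots> = (a \<oplus> a) \<oplus> (\<ominus>a)" using h by (intro add_assoc[symmetric]) simp_all
  also have "\<dots> = czero K A B" using h by simp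
  finally show ?thesis .
qed

lemma zero_zero[simp]: "czero K A B \<oplus> czero K A B = czero K A B" by simp

lemma cmp_zero_r[simp]: "src K h = B \<Longrightarrow> h \<cdot> czero K A B = czero K A (tgt K h)"
  by (rule cancel0) (simp_all flip: cmp_add_r)
lemma cmp_zero_l[simp]: "tgt K f = A \<Longrightarrow> czero K A B \<cdot> f = czero K (src K f) B"
  by (rule cancel0) (simp_all flip: cmp_add_l)
lemma dag_zero[simp]: "(czero K A B)\<^sup>\<dagger> = czero K B A"
  by (rule cancel0) (simp_all flip: dag_add)

lemma neg_unique: "src K a = A \<Longrightarrow> tgt K a = B \<Longrightarrow> src K b = A \<Longrightarrow> tgt K b = B \<Longrightarrow> a \<oplus> b = czero K A B \<Longrightarrow> b = \<ominus>a"
proof -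
  assume h: "src K a = A" "tgt K a = B" "src K b = A" "tgt K b = B" "a \<oplus> b = czero K A B"
  have "b = (\<ominus>a \<oplus> a) \<oplus> b" using h by simp
  also have "\<dots> = \<ominus>a \<oplus> (a \<oplus> b)" using h by (intro add_assoc) simp_all
  also have "\<dots> = \<ominus>a" using h by simp
  finally show ?thesis .
qed

lemma neg_neg[simp]: "\<ominus>(\<ominus>f) = f"
  by (rule neg_unique[symmetric, of "\<ominus>f" "src K f" "tgt K f"]) simp_all
lemma neg_zero[simp]: "\<ominus>(czero K A B) = czero K A B"
  by (rule neg_unique[symmetric, of "czero K A B" A B]) simp_all
lemma cmp_neg_r[simp]: "tgt K f = src K h \<Longrightarrow> h \<cdot> (\<ominus>f) = \<ominus>(h \<cdot> f)"
  by (rule neg_unique[of _ "src K f" "tgt K h"]) (simp_all flip: cmp_add_r)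
lemma cmp_neg_l[simp]: "tgt K h = src K f \<Longrightarrow> (\<ominus>f) \<cdot> h = \<ominus>(f \<cdot> h)"
  by (rule neg_unique[of _ "src K h" "tgt K f"]) (simp_all flip: cmp_add_l)
lemma dag_neg[simp]: "(\<ominus>f)\<^sup>\<dagger> = \<ominus>(f\<^sup>\<dagger>)"
  by (rule neg_unique[of _ "tgt K f" "src K f"]) (simp_all flip: dag_add)

lemma add_lcomm: "src K f = src K g \<Longrightarrow> tgt K f = tgt K g \<Longrightarrow> src K g = src K h \<Longrightarrow> tgt K g = tgt K h \<Longrightarrow>
   f \<oplus> (g \<oplus> h) = g \<oplus> (f \<oplus> h)"
  by (metis add_assoc add_comm)
lemma add_neg_cancel1[simp]: "src K f = src K g \<Longrightarrow> tgt K f = tgt K g \<Longrightarrow> f \<oplus> (\<ominus>f \<oplus> g) = g"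
  by (simp flip: add_assoc)
lemma add_neg_cancel2[simp]: "src K f = src K g \<Longrightarrow> tgt K f = tgt K g \<Longrightarrow> \<ominus>f \<oplus> (f \<oplus> g) = g"
  by (simp flip: add_assoc)
lemma neg_add[simp]: "src K f = src K g \<Longrightarrow> tgt K f = tgt K g \<Longrightarrow> \<ominus>(f \<oplus> g) = \<ominus>f \<oplus> \<ominus>g"
proof -
  assume h: "src K f = src K g" "tgt K f = tgt K g"
  have "(f \<oplus> g) \<oplus> (\<ominus>f \<oplus> \<ominus>g) = czero K (src K f) (tgt K f)"
    using h by (simp add: add_lcomm[of g "\<ominus>f"])
  then show ?thesis using h by (intro neg_unique[symmetric]) simp_all
qed


lemma p1i1[simp]: "pr1 K A B \<cdot> (pr1 K A B)\<^sup>\<dagger> = cid K A" and p2i2[simp]: "pr2 K A B \<cdot> (pr2 K A B)\<^sup>\<dagger> = cid K B"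
  and p1i2[simp]: "pr1 K A B \<cdot> (pr2 K A B)\<^sup>\<dagger> = czero K B A" and p2i1[simp]: "pr2 K A B \<cdot> (pr1 K A B)\<^sup>\<dagger> = czero K A B"
  and ipsum: "((pr1 K A B)\<^sup>\<dagger> \<cdot> pr1 K A B) \<oplus> ((pr2 K A B)\<^sup>\<dagger> \<cdot> pr2 K A B) = cid K (bip K A B)"
  using bip_ax by auto

lemma p1i1'[simp]: "tgt K f = A \<Longrightarrow> pr1 K A B \<cdot> ((pr1 K A B)\<^sup>\<dagger> \<cdot> f) = f"
  and p2i2'[simp]: "tgt K f = B \<Longrightarrow> pr2 K A B \<cdot> ((pr2 K A B)\<^sup>\<dagger> \<cdot> f) = f"
  and p1i2'[simp]: "tgt K f = B \<Longrightarrow> pr1 K A B \<cdot> ((pr2 K A B)\<^sup>\<dagger> \<cdot> f) = czero K (src K f) A"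
  and p2i1'[simp]: "tgt K f = A \<Longrightarrow> pr2 K A B \<cdot> ((pr1 K A B)\<^sup>\<dagger> \<cdot> f) = czero K (src K f) B"
  by (simp_all flip: assoc)

lemma src_col2[simp]: "src K x = src K y \<Longrightarrow> src K (col2 K x y) = src K x"
  and tgt_col2[simp]: "src K x = src K y \<Longrightarrow> tgt K (col2 K x y) = bip K (tgt K x) (tgt K y)"
  unfolding col2_def by simp_all
lemma src_row2[simp]: "tgt K a = tgt K b \<Longrightarrow> src K (row2 K a b) = bip K (src K a) (src K b)"
  and tgt_row2[simp]: "tgt K a = tgt K b \<Longrightarrow> tgt K (row2 K a b) = tgt K a"
  unfolding row2_def by simp_all

lemma pr1_col2[simp]: "src K x = src K y \<Longrightarrow> tgt K x = A \<Longrightarrow> tgt K y = B \<Longrightarrow> pr1 K A B \<cdot> col2 K x y = x"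
  and pr2_col2[simp]: "src K x = src K y \<Longrightarrow> tgt K x = A \<Longrightarrow> tgt K y = B \<Longrightarrow> pr2 K A B \<cdot> col2 K x y = y"
  unfolding col2_def by simp_all
lemma row2_i1[simp]: "tgt K a = tgt K b \<Longrightarrow> src K a = A \<Longrightarrow> src K b = B \<Longrightarrow> row2 K a b \<cdot> (pr1 K A B)\<^sup>\<dagger> = a"
  and row2_i2[simp]: "tgt K a = tgt K b \<Longrightarrow> src K a = A \<Longrightarrow> src K b = B \<Longrightarrow> row2 K a b \<cdot> (pr2 K A B)\<^sup>\<dagger> = b"
  unfolding row2_def by simp_all

lemma col2_eta: "tgt K m = bip K A B \<Longrightarrow> col2 K (pr1 K A B \<cdot> m) (pr2 K A B \<cdot> m) = m"
proof -
  assume h: "tgt K m = bip K A B"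
  have "col2 K (pr1 K A B \<cdot> m) (pr2 K A B \<cdot> m) = (((pr1 K A B)\<^sup>\<dagger> \<cdot> pr1 K A B) \<oplus> ((pr2 K A B)\<^sup>\<dagger> \<cdot> pr2 K A B)) \<cdot> m"
    unfolding col2_def using h by simp
  also have "\<dots> = m" using h by (simp only: ipsum) simp
  finally show ?thesis .
qed
lemma row2_eta: "src K m = bip K A B \<Longrightarrow> row2 K (m \<cdot> (pr1 K A B)\<^sup>\<dagger>) (m \<cdot> (pr2 K A B)\<^sup>\<dagger>) = m"
proof -
  assume h: "src K m = bip K A B"
  have "row2 K (m \<cdot> (pr1 K A B)\<^sup>\<dagger>) (m \<cdot> (pr2 K A B)\<^sup>\<dagger>) = m \<cdot> (((pr1 K A B)\<^sup>\<dagger> \<cdot> pr1 K A B) \<oplus> ((pr2 K A B)\<^sup>\<dagger> \<cdot> pr2 K A B))"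
    unfolding row2_def using h by simp
  also have "\<dots> = m" using h by (simp only: ipsum) simp
  finally show ?thesis .
qed

lemma col2_cmp[simp]: "src K x = src K y \<Longrightarrow> tgt K f = src K x \<Longrightarrow> col2 K x y \<cdot> f = col2 K (x \<cdot> f) (y \<cdot> f)"
  unfolding col2_def by simp
lemma cmp_row2[simp]: "tgt K a = tgt K b \<Longrightarrow> src K g = tgt K a \<Longrightarrow> g \<cdot> row2 K a b = row2 K (g \<cdot> a) (g \<cdot> b)"
  unfolding row2_def by simp
lemma row2_col2[simp]: "src K x = src K y \<Longrightarrow> tgt K a = tgt K b \<Longrightarrow> src K a = tgt K x \<Longrightarrow> src K b = tgt K y \<Longrightarrow>
   row2 K a b \<cdot> col2 K x y = (a \<cdot> x) \<oplus> (b \<cdot> y)"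
  unfolding row2_def by simp
lemma dag_col2[simp]: "src K x = src K y \<Longrightarrow> (col2 K x y)\<^sup>\<dagger> = row2 K (x\<^sup>\<dagger>) (y\<^sup>\<dagger>)"
  unfolding row2_def col2_def by simp
lemma dag_row2[simp]: "tgt K a = tgt K b \<Longrightarrow> (row2 K a b)\<^sup>\<dagger> = col2 K (a\<^sup>\<dagger>) (b\<^sup>\<dagger>)"
  unfolding row2_def col2_def by simp

lemma col2_inj: "src K x = src K y \<Longrightarrow> src K x' = src K y' \<Longrightarrow> tgt K x = tgt K x' \<Longrightarrow> tgt K y = tgt K y' \<Longrightarrow>
   (col2 K x y = col2 K x' y') = (x = x' \<and> y = y')"
  by (metis pr1_col2 pr2_col2)
lemma row2_inj: "tgt K a = tgt K b \<Longrightarrow> tgt K a' = tgt K b' \<Longrightarrow> src K a = src K a' \<Longrightarrow> src K b = src K b' \<Longrightarrow>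
   (row2 K a b = row2 K a' b') = (a = a' \<and> b = b')"
  by (metis row2_i1 row2_i2)

lemma col2_add[simp]: "src K x = src K y \<Longrightarrow> src K x' = src K y' \<Longrightarrow> src K x = src K x' \<Longrightarrow>
   tgt K x = tgt K x' \<Longrightarrow> tgt K y = tgt K y' \<Longrightarrow>
   col2 K x y \<oplus> col2 K x' y' = col2 K (x \<oplus> x') (y \<oplus> y')"
  by (rule trans[OF col2_eta[symmetric, of _ "tgt K x" "tgt K y"]]) simp_all
lemma row2_add[simp]: "tgt K a = tgt K b \<Longrightarrow> tgt K a' = tgt K b' \<Longrightarrow> tgt K a = tgt K a' \<Longrightarrow>
   src K a = src K a' \<Longrightarrow> src K b = src K b' \<Longrightarrow>
   row2 K a b \<oplus> row2 K a' b' = row2 K (a \<oplus> a') (b \<oplus> b')"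
  by (rule trans[OF row2_eta[symmetric, of _ "src K a" "src K b"]]) simp_all
lemma col2_neg[simp]: "src K x = src K y \<Longrightarrow> \<ominus>(col2 K x y) = col2 K (\<ominus>x) (\<ominus>y)"
  by (rule trans[OF col2_eta[symmetric, of _ "tgt K x" "tgt K y"]]) simp_all
lemma row2_neg[simp]: "tgt K a = tgt K b \<Longrightarrow> \<ominus>(row2 K a b) = row2 K (\<ominus>a) (\<ominus>b)"
  by (rule trans[OF row2_eta[symmetric, of _ "src K a" "src K b"]]) simp_all
lemma col2_zero[simp]: "col2 K (czero K D A) (czero K D B) = czero K D (bip K A B)"
  by (rule trans[OF _ col2_eta[of _ A B]]) simp_all
lemma row2_zero[simp]: "row2 K (czero K A D) (czero K B D) = czero K (bip K A B) D"
  by (rule trans[OF _ row2_eta[of _ A B]]) simp_all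
lemma row2_col2_swap[simp]: "src K a = src K c \<Longrightarrow> src K b = src K d \<Longrightarrow> tgt K a = tgt K b \<Longrightarrow> tgt K c = tgt K d \<Longrightarrow>
   row2 K (col2 K a c) (col2 K b d) = col2 K (row2 K a b) (row2 K c d)"
  by (rule trans[OF col2_eta[symmetric, of _ "tgt K a" "tgt K c"]]) simp_all

lemma pr1_row: "pr1 K A B = row2 K (cid K A) (czero K B A)"
  by (rule trans[OF row2_eta[symmetric, of _ A B]]) simp_all
lemma pr2_row: "pr2 K A B = row2 K (czero K A B) (cid K B)"
  by (rule trans[OF row2_eta[symmetric, of _ A B]]) simp_all
lemma cid_bip: "cid K (bip K A B) = col2 K (pr1 K A B) (pr2 K A B)"
  by (rule trans[OF col2_eta[symmetric, of _ A B]]) simp_all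


lemma add_neg_cancel3[simp]: "src K f = src K g \<Longrightarrow> tgt K f = tgt K g \<Longrightarrow> f \<oplus> (g \<oplus> \<ominus>f) = g"
  by (simp add: add_lcomm[of f g])

lemma mpi: assumes "mp_inverse K f h"
  shows "src K h = tgt K f" "tgt K h = src K f" "f \<cdot> (h \<cdot> f) = f" "h \<cdot> (f \<cdot> h) = h"
    "h\<^sup>\<dagger> \<cdot> f\<^sup>\<dagger> = f \<cdot> h" "f\<^sup>\<dagger> \<cdot> h\<^sup>\<dagger> = h \<cdot> f"
  using assms unfolding mp_inverse_def by auto

lemma key:
  assumes f: "src K f = A" "tgt K f = B" and g: "src K g = A" "tgt K g = C"
   and al: "src K \<alpha> = B" "tgt K \<alpha> = B" and be: "src K \<beta> = C" "tgt K \<beta> = B"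
   and de: "src K \<delta> = C" "tgt K \<delta> = C" 
   and mp: "moore_penrose K" and pos: "dag_positive K (mat2 K \<alpha> \<beta> (\<beta>\<^sup>\<dagger>) \<delta>)"
   and mpa: "mp_inverse K \<alpha> ao"
 shows "\<alpha> \<cdot> (ao\<^sup>\<dagger> \<cdot> \<beta>) = \<beta>" "\<beta>\<^sup>\<dagger> \<cdot> (ao \<cdot> \<alpha>) = \<beta>\<^sup>\<dagger>"
   "dag_positive K (csub K \<delta> (\<beta>\<^sup>\<dagger> \<cdot> (ao \<cdot> \<beta>)))"
proof -
  obtain \<phi> where P: "mat2 K \<alpha> \<beta> (\<beta>\<^sup>\<dagger>) \<delta> = \<phi>\<^sup>\<dagger> \<cdot> \<phi>" using pos unfolding dag_positive_def by blast
  have "src K (mat2 K \<alpha> \<beta> (\<beta>\<^sup>\<dagger>) \<delta>) = bip K B C" using al be de by (simp add: mat2_def)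
  then have sp: "src K \<phi> = bip K B C" unfolding P by simp
  define D where "D = tgt K \<phi>"
  define \<phi>1 where "\<phi>1 = \<phi> \<cdot> (pr1 K B C)\<^sup>\<dagger>"
  define \<phi>2 where "\<phi>2 = \<phi> \<cdot> (pr2 K B C)\<^sup>\<dagger>"
  have t1: "src K \<phi>1 = B" "tgt K \<phi>1 = D" "src K \<phi>2 = C" "tgt K \<phi>2 = D"
    unfolding \<phi>1_def \<phi>2_def D_def using sp by simp_all
  have "pr1 K B C \<cdot> (mat2 K \<alpha> \<beta> (\<beta>\<^sup>\<dagger>) \<delta> \<cdot> (pr1 K B C)\<^sup>\<dagger>) = \<alpha>"
    using al be de by (simp add: mat2_def)
  then have ea: "\<alpha> = \<phi>1\<^sup>\<dagger> \<cdot> \<phi>1" unfolding P \<phi>1_def using sp by simp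
  have "pr1 K B C \<cdot> (mat2 K \<alpha> \<beta> (\<beta>\<^sup>\<dagger>) \<delta> \<cdot> (pr2 K B C)\<^sup>\<dagger>) = \<beta>"
    using al be de by (simp add: mat2_def)
  then have eb: "\<beta> = \<phi>1\<^sup>\<dagger> \<cdot> \<phi>2" unfolding P \<phi>1_def \<phi>2_def using sp by simp
  have "pr2 K B C \<cdot> (mat2 K \<alpha> \<beta> (\<beta>\<^sup>\<dagger>) \<delta> \<cdot> (pr2 K B C)\<^sup>\<dagger>) = \<delta>"
    using al be de by (simp add: mat2_def)
  then have ed: "\<delta> = \<phi>2\<^sup>\<dagger> \<cdot> \<phi>2" unfolding P \<phi>2_def using sp by simp
  obtain p where mpp: "mp_inverse K \<phi>1 p" using mp unfolding moore_penrose_def by blast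
  note pp = mpi[OF mpp] and aa = mpi[OF mpa]
  have tp: "src K p = D" "tgt K p = B" using pp t1 by simp_all
  have tao: "src K ao = B" "tgt K ao = B" using aa al by simp_all
  have asa: "\<alpha>\<^sup>\<dagger> = \<alpha>" using ea t1 by simp
  have L1: "\<phi>1 = p\<^sup>\<dagger> \<cdot> \<alpha>"
  proof -
    have "p\<^sup>\<dagger> \<cdot> \<alpha> = (p\<^sup>\<dagger> \<cdot> \<phi>1\<^sup>\<dagger>) \<cdot> \<phi>1" using ea t1 tp by simp
    also have "\<dots> = (\<phi>1 \<cdot> p) \<cdot> \<phi>1" using pp(5) by simp
    also have "\<dots> = \<phi>1" using pp(3) t1 tp by simp
    finally show ?thesis by simp
  qed
  have L3: "\<phi>1 \<cdot> (ao \<cdot> \<alpha>) = \<phi>1"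
  proof -
    have "\<phi>1 \<cdot> (ao \<cdot> \<alpha>) = p\<^sup>\<dagger> \<cdot> (\<alpha> \<cdot> (ao \<cdot> \<alpha>))" by (subst L1) (use t1 tp tao al in simp)
    also have "\<dots> = \<phi>1" using aa(3) L1 by simp
    finally show ?thesis .
  qed
  have L2: "\<phi>1\<^sup>\<dagger> = \<alpha> \<cdot> p"
  proof -
    have "\<phi>1\<^sup>\<dagger> = (\<phi>1 \<cdot> (p \<cdot> \<phi>1))\<^sup>\<dagger>" using pp(3) by simp
    also have "\<dots> = \<phi>1\<^sup>\<dagger> \<cdot> (p\<^sup>\<dagger> \<cdot> \<phi>1\<^sup>\<dagger>)" using t1 tp by simp
    also have "\<dots> = \<phi>1\<^sup>\<dagger> \<cdot> (\<phi>1 \<cdot> p)" using pp(5) by simp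
    also have "\<dots> = \<alpha> \<cdot> p" using ea t1 tp by simp
    finally show ?thesis .
  qed
  have L4: "\<phi>1 \<cdot> (ao \<cdot> (\<phi>1\<^sup>\<dagger> \<cdot> Z)) = \<phi>1 \<cdot> (p \<cdot> Z)" if "tgt K Z = D" for Z
  proof -
    have "\<phi>1 \<cdot> (ao \<cdot> (\<phi>1\<^sup>\<dagger> \<cdot> Z)) = (\<phi>1 \<cdot> (ao \<cdot> \<alpha>)) \<cdot> (p \<cdot> Z)"
      by (subst L2) (use t1 tp tao al that in simp)
    also have "\<dots> = \<phi>1 \<cdot> (p \<cdot> Z)" using L3 by simp
    finally show ?thesis .
  qed
  have L5: "ao \<cdot> (\<alpha> \<cdot> \<phi>1\<^sup>\<dagger>) = \<phi>1\<^sup>\<dagger>"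
  proof -
    have "\<phi>1\<^sup>\<dagger> = (\<phi>1 \<cdot> (ao \<cdot> \<alpha>))\<^sup>\<dagger>" using L3 by simp
    also have "\<dots> = (\<alpha>\<^sup>\<dagger> \<cdot> ao\<^sup>\<dagger>) \<cdot> \<phi>1\<^sup>\<dagger>" using t1 tao al by simp
    also have "\<dots> = ao \<cdot> (\<alpha> \<cdot> \<phi>1\<^sup>\<dagger>)" using aa(6) t1 tao al by simp
    finally show ?thesis by simp
  qed
  have aao: "\<alpha> \<cdot> ao\<^sup>\<dagger> = ao \<cdot> \<alpha>" using aa(6) asa by simp
  show H1: "\<alpha> \<cdot> (ao\<^sup>\<dagger> \<cdot> \<beta>) = \<beta>"
  proof -
    have "\<alpha> \<cdot> (ao\<^sup>\<dagger> \<cdot> \<beta>) = (\<alpha> \<cdot> ao\<^sup>\<dagger>) \<cdot> \<beta>" using tao al be by simp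
    also have "\<dots> = (ao \<cdot> (\<alpha> \<cdot> \<phi>1\<^sup>\<dagger>)) \<cdot> \<phi>2" using aao eb t1 tao al by simp
    also have "\<dots> = \<beta>" using L5 eb by simp
    finally show ?thesis .
  qed
  show "\<beta>\<^sup>\<dagger> \<cdot> (ao \<cdot> \<alpha>) = \<beta>\<^sup>\<dagger>"
  proof -
    have "(\<alpha> \<cdot> (ao\<^sup>\<dagger> \<cdot> \<beta>))\<^sup>\<dagger> = \<beta>\<^sup>\<dagger>" using H1 by simp
    then show ?thesis using tao al be asa by simp
  qed
  define Q where "Q = \<phi>1 \<cdot> p"
  define R where "R = cid K D \<oplus> \<ominus>Q"
  have tQ: "src K Q = D" "tgt K Q = D" unfolding Q_def using t1 tp by simp_all
  have tR: "src K R = D" "tgt K R = D" unfolding R_def using tQ by simp_all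
  have Qsa: "Q\<^sup>\<dagger> = Q" unfolding Q_def using pp(5) t1 tp by simp
  have QQ: "Q \<cdot> Q = Q" unfolding Q_def using pp(3) t1 tp by (simp flip: assoc)
  have Rsa: "R\<^sup>\<dagger> = R" unfolding R_def using tQ Qsa by simp
  have RR: "R \<cdot> R = R"
  proof -
    have "R \<cdot> R = R \<oplus> \<ominus>(R \<cdot> Q)" unfolding R_def using tQ by simp
    also have "R \<cdot> Q = czero K D D" unfolding R_def using tQ QQ by simp
    finally show ?thesis using tR by simp
  qed
  have "(R \<cdot> \<phi>2)\<^sup>\<dagger> \<cdot> (R \<cdot> \<phi>2) = \<phi>2\<^sup>\<dagger> \<cdot> ((R \<cdot> R) \<cdot> \<phi>2)" using Rsa tR t1 by simp
  also have "\<dots> = \<phi>2\<^sup>\<dagger> \<cdot> (R \<cdot> \<phi>2)" using RR by simp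
  also have "\<dots> = (\<phi>2\<^sup>\<dagger> \<cdot> \<phi>2) \<oplus> \<ominus>(\<phi>2\<^sup>\<dagger> \<cdot> (\<phi>1 \<cdot> (p \<cdot> \<phi>2)))" unfolding R_def Q_def using t1 tp by simp
  also have "\<dots> = csub K \<delta> (\<beta>\<^sup>\<dagger> \<cdot> (ao \<cdot> \<beta>))" unfolding csub_def ed eb using t1 tp tao L4 by simp
  finally show "dag_positive K (csub K \<delta> (\<beta>\<^sup>\<dagger> \<cdot> (ao \<cdot> \<beta>)))" unfolding dag_positive_def by metis
qed


lemma cond:
  assumes f: "src K f = A" "tgt K f = B" and g: "src K g = A" "tgt K g = C"
   and al: "src K \<alpha> = B" "tgt K \<alpha> = B" and be: "src K \<beta> = C" "tgt K \<beta> = B"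
   and de: "src K \<delta> = C" "tgt K \<delta> = C" and s: "src K s = X" "tgt K s = B"
   and t: "src K t = X" "tgt K t = C"
   and mp: "moore_penrose K" and pos: "dag_positive K (mat2 K \<alpha> \<beta> (\<beta>\<^sup>\<dagger>) \<delta>)"
   and mpa: "mp_inverse K \<alpha> ao"
 shows "is_conditional K X A B C
           (col2 K f g, mat2 K \<alpha> \<beta> (dag K \<beta>) \<delta>, col2 K s t)
           (row2 K (cmp K (dag K \<beta>) ao) (csub K g (cmp K (dag K \<beta>) (cmp K ao f))),
            csub K \<delta> (cmp K (dag K \<beta>) (cmp K ao \<beta>)),
            csub K t (cmp K (dag K \<beta>) (cmp K ao s)))"
proof -
  note k = key[OF f g al be de mp pos mpa]
  have tao: "src K ao = B" "tgt K ao = B" using mpi[OF mpa] al by simp_all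
  show ?thesis unfolding is_conditional_def
  proof
    show "gmap K X (bip K B A) C
     (row2 K (\<beta>\<^sup>\<dagger> \<cdot> ao) (csub K g (\<beta>\<^sup>\<dagger> \<cdot> ao \<cdot> f)), csub K \<delta> (\<beta>\<^sup>\<dagger> \<cdot> ao \<cdot> \<beta>),
      csub K t (\<beta>\<^sup>\<dagger> \<cdot> ao \<cdot> s))"
      unfolding gmap_def hom_def using k(3) f g al be de s t tao by (simp add: csub_def)
  next
    show "gcomp K (gtensor K (gid K X B) (row2 K (cmp K (dag K \<beta>) ao) (csub K g (cmp K (dag K \<beta>) (cmp K ao f))),
            csub K \<delta> (cmp K (dag K \<beta>) (cmp K ao \<beta>)),
            csub K t (cmp K (dag K \<beta>) (cmp K ao s))))
      (gcomp K (glift K X (bassoc K B B A))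
       (gcomp K (gtensor K (gcopy K X B) (gid K X A))
        (gcomp K (gtensor K (gid K X B) (glift K X (pr2 K (zobj K) A)))
         (gcomp K (gtensor K (gid K X B) (gtensor K (gdel K X C) (gid K X A)))
          (gcomp K (glift K X (bassoc K B C A))
           (gcomp K (gtensor K (col2 K f g, mat2 K \<alpha> \<beta> (dag K \<beta>) \<delta>, col2 K s t) (gid K X A))
            (gcopy K X A))))))) = (col2 K f g, mat2 K \<alpha> \<beta> (dag K \<beta>) \<delta>, col2 K s t)"
      using f g al be de s t tao k(1,2)
      by (simp add: gcomp_def gtensor_def gid_def glift_def gcopy_def gdel_def bassoc_def dsum_def mat2_def csub_def pr1_row pr2_row)
  qed
qed

lemma cond_exists:
  assumes mp: "moore_penrose K" and F: "gmap K X A (bip K B C) F"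
  shows "\<exists>G. is_conditional K X A B C F G"
proof -
  obtain h p x where Fe: "F = (h, p, x)" by (cases F) auto
  have th: "src K h = A" "tgt K h = bip K B C" and tp: "src K p = bip K B C" "tgt K p = bip K B C"
    and tx: "src K x = X" "tgt K x = bip K B C" and pos: "dag_positive K p"
    using F unfolding Fe gmap_def hom_def by auto
  have psa: "p\<^sup>\<dagger> = p" using pos unfolding dag_positive_def by auto
  define \<alpha> where "\<alpha> = pr1 K B C \<cdot> (p \<cdot> (pr1 K B C)\<^sup>\<dagger>)"
  define \<beta> where "\<beta> = pr1 K B C \<cdot> (p \<cdot> (pr2 K B C)\<^sup>\<dagger>)"
  define \<delta> where "\<delta> = pr2 K B C \<cdot> (p \<cdot> (pr2 K B C)\<^sup>\<dagger>)"
  have ta: "src K \<alpha> = B" "tgt K \<alpha> = B" "src K \<beta> = C" "tgt K \<beta> = B" "src K \<delta> = C" "tgt K \<delta> = C"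
    unfolding \<alpha>_def \<beta>_def \<delta>_def using tp by simp_all
  have he: "col2 K (pr1 K B C \<cdot> h) (pr2 K B C \<cdot> h) = h" using th(2) by (rule col2_eta)
  have xe: "col2 K (pr1 K B C \<cdot> x) (pr2 K B C \<cdot> x) = x" using tx(2) by (rule col2_eta)
  have r: "row2 K (p \<cdot> (pr1 K B C)\<^sup>\<dagger>) (p \<cdot> (pr2 K B C)\<^sup>\<dagger>) = p" using tp(1) by (rule row2_eta)
  have "mat2 K \<alpha> \<beta> (\<beta>\<^sup>\<dagger>) \<delta> = col2 K (pr1 K B C \<cdot> row2 K (p \<cdot> (pr1 K B C)\<^sup>\<dagger>) (p \<cdot> (pr2 K B C)\<^sup>\<dagger>))
      (pr2 K B C \<cdot> row2 K (p \<cdot> (pr1 K B C)\<^sup>\<dagger>) (p \<cdot> (pr2 K B C)\<^sup>\<dagger>))"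
    unfolding mat2_def \<alpha>_def \<beta>_def \<delta>_def using tp psa by simp
  also have "\<dots> = p" unfolding r using tp(2) by (rule col2_eta)
  finally have pe: "mat2 K \<alpha> \<beta> (\<beta>\<^sup>\<dagger>) \<delta> = p" .
  obtain ao where mpa: "mp_inverse K \<alpha> ao" using mp unfolding moore_penrose_def by blast
  have "is_conditional K X A B C
           (col2 K (pr1 K B C \<cdot> h) (pr2 K B C \<cdot> h), mat2 K \<alpha> \<beta> (dag K \<beta>) \<delta>, col2 K (pr1 K B C \<cdot> x) (pr2 K B C \<cdot> x))
           (row2 K (cmp K (dag K \<beta>) ao) (csub K (pr2 K B C \<cdot> h) (cmp K (dag K \<beta>) (cmp K ao (pr1 K B C \<cdot> h)))),
            csub K \<delta> (cmp K (dag K \<beta>) (cmp K ao \<beta>)),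
            csub K (pr2 K B C \<cdot> x) (cmp K (dag K \<beta>) (cmp K ao (pr1 K B C \<cdot> x))))"
    by (rule cond) (use th tx ta mp pos pe mpa in simp_all)
  then show ?thesis unfolding he xe pe Fe by blast
qed

end

theorem mainTheorem11:
  fixes K :: "('o, 'm) dacat" and X :: 'o
  assumes dac: "dagger_additive_cat K" and mp: "moore_penrose K"
  shows "(\<forall>A B C F. gmap K X A (bip K B C) F \<longrightarrow> (\<exists>G. is_conditional K X A B C F G))
    \<and> (\<forall>A B C f g \<alpha> \<beta> \<delta> s t \<alpha>o.
         f \<in> hom K A B \<longrightarrow> g \<in> hom K A C \<longrightarrow> \<alpha> \<in> hom K B B \<longrightarrow> \<beta> \<in> hom K C B \<longrightarrow>
         \<delta> \<in> hom K C C \<longrightarrow> s \<in> hom K X B \<longrightarrow> t \<in> hom K X C \<longrightarrow>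
         dag_positive K (mat2 K \<alpha> \<beta> (dag K \<beta>) \<delta>) \<longrightarrow>
         mp_inverse K \<alpha> \<alpha>o \<longrightarrow>
         is_conditional K X A B C
           (col2 K f g, mat2 K \<alpha> \<beta> (dag K \<beta>) \<delta>, col2 K s t)
           (row2 K (cmp K (dag K \<beta>) \<alpha>o) (csub K g (cmp K (dag K \<beta>) (cmp K \<alpha>o f))),
            csub K \<delta> (cmp K (dag K \<beta>) (cmp K \<alpha>o \<beta>)),
            csub K t (cmp K (dag K \<beta>) (cmp K \<alpha>o s))))"
proof -
  interpret dac K using dac by (rule dac.intro)
  show ?thesis
  proof (intro conjI allI impI)
    fix A B C F assume "gmap K X A (bip K B C) F"
    then show "\<exists>G. is_conditional K X A B C F G" using mp by (intro cond_exists)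
  next
    fix A B C f g \<alpha> \<beta> \<delta> s t \<alpha>o
    assume "f \<in> hom K A B" "g \<in> hom K A C" "\<alpha> \<in> hom K B B" "\<beta> \<in> hom K C B"
      "\<delta> \<in> hom K C C" "s \<in> hom K X B" "t \<in> hom K X C"
      "dag_positive K (mat2 K \<alpha> \<beta> (dag K \<beta>) \<delta>)" "mp_inverse K \<alpha> \<alpha>o"
    then show "is_conditional K X A B C
           (col2 K f g, mat2 K \<alpha> \<beta> (dag K \<beta>) \<delta>, col2 K s t)
           (row2 K (cmp K (dag K \<beta>) \<alpha>o) (csub K g (cmp K (dag K \<beta>) (cmp K \<alpha>o f))),
            csub K \<delta> (cmp K (dag K \<beta>) (cmp K \<alpha>o \<beta>)),
            csub K t (cmp K (dag K \<beta>) (cmp K \<alpha>o s)))"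
      using mp unfolding hom_def by (intro cond) auto
  qed
qed

end
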